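(* Let $n$ be sufficiently large and let $K_{2n+1}$ be ND-coloured. Let $x,y\in V(K_{2n+1})$ be distinct vertices, let $c_1,c_2\in C(K_{2n+1})$ be distinct colours, and let $X\subseteq V(K_{2n+1})$ and $C\subseteq C(K_{2n+1})$ satisfy $|X|\leq n/25$ and $|C|\leq n/25$. Then there is a set $C'\subseteq C(K_{2n+1})\setminus (C\cup\{c_1,c_2\})$ with $|C'|=6$ such that, for each $i\in \{1,2\}$, there is a $(C'\cup\{c_i\})$-rainbow $x,y$-path of length 7 all of whose interior vertices lie in $V(K_{2n+1})\setminus X$.
   Context: ND-colouring of $K_{2n+1}$: vertex set $\{0,\dots,2n\}$, edge $ij$ has colour $k\in\{1,\dots,n\}$ where $i-j\equiv\pm k\pmod{2n+1}$; $C(K_{2n+1})=\{1,\dots,n\}$. A graph is $D$-rainbow if its edges have distinct colours all in $D$. Length of a path is its number of edges. *)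

theory Defs
  imports Main
begin

definition nd_vertices :: "nat \<Rightarrow> nat set" where
  "nd_vertices n = {0..2*n}"

definition nd_colours :: "nat \<Rightarrow> nat set" where
  "nd_colours n = {1..n}"

text \<open>Colour of edge ij: the k in 1..n with i - j = +-k mod (2n+1).\<close>
definition nd_col :: "nat \<Rightarrow> nat \<Rightarrow> nat \<Rightarrow> nat" where
  "nd_col n i j = (let m = 2*n+1; d = (i + m - j mod m) mod m in min d (m - d))"

definition path_edges :: "nat list \<Rightarrow> (nat \<times> nat) list" where
  "path_edges P = zip (butlast P) (tl P)"

definition path_colours :: "nat \<Rightarrow> nat list \<Rightarrow> nat list" where
  "path_colours n P = map (\<lambda>(i,j). nd_col n i j) (path_edges P)"

definition is_xy_path :: "nat \<Rightarrow> nat \<Rightarrow> nat \<Rightarrow> nat \<Rightarrow> nat list \<Rightarrow> bool" where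
  "is_xy_path n x y L P \<longleftrightarrow> length P = L + 1 \<and> distinct P \<and>
     set P \<subseteq> nd_vertices n \<and> hd P = x \<and> last P = y"

definition rainbow :: "nat \<Rightarrow> nat set \<Rightarrow> nat list \<Rightarrow> bool" where
  "rainbow n D P \<longleftrightarrow> distinct (path_colours n P) \<and> set (path_colours n P) \<subseteq> D"

definition interior :: "nat list \<Rightarrow> nat set" where
  "interior P = set (butlast (tl P))"

end

theory Submission
  imports Defs
begin


definition MM :: "nat \<Rightarrow> int" where "MM n = 2 * int n + 1"
definition colN :: "nat \<Rightarrow> int \<Rightarrow> nat" where
  "colN n z = nat (min (z mod MM n) (MM n - z mod MM n))"
definition vx :: "nat \<Rightarrow> int \<Rightarrow> nat" where
  "vx n z = nat (z mod MM n)"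

lemma MM_pos[simp]: "MM n > 0" by (simp add: MM_def)

lemma modeq: "((a::int) mod M = b mod M) = ((a - b) mod M = 0)"
  by (metis mod_eq_dvd_iff dvd_eq_mod_eq_0)

lemma vx_le: "vx n z \<le> 2 * n"
proof -
  have "z mod MM n < MM n" by simp
  then have "z mod MM n < 2 * int n + 1" by (simp add: MM_def)
  then show ?thesis by (simp add: vx_def nat_le_iff)
qed

lemma int_vx: "int (vx n z) = z mod MM n"
  by (simp add: vx_def)

lemma vx_eq_iff: "vx n a = vx n b \<longleftrightarrow> a mod MM n = b mod MM n"
  by (metis int_vx of_nat_eq_iff)

lemma vx_int: "x \<le> 2 * n \<Longrightarrow> vx n (int x) = x"
  by (simp add: vx_def MM_def)

lemma vx_neq: "(a - b) mod MM n \<noteq> 0 \<Longrightarrow> vx n a \<noteq> vx n b"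
  using vx_eq_iff[of n a b] modeq[of a "MM n" b] by simp

lemma vx_notin:
  assumes h: "\<And>v. v \<in> X \<Longrightarrow> (z - int v) mod MM n \<noteq> 0"
  shows "vx n z \<notin> X"
proof
  assume m: "vx n z \<in> X"
  have "(z - z mod MM n) mod MM n = (z - z) mod MM n" by (rule mod_diff_right_eq)
  then have "(z - int (vx n z)) mod MM n = 0" by (simp only: int_vx) simp
  moreover have "(z - int (vx n z)) mod MM n \<noteq> 0" by (rule h[OF m])
  ultimately show False by simp
qed

lemma colN_le: "colN n z \<le> n"
proof -
  have "0 \<le> z mod MM n" "z mod MM n < MM n" by auto
  then show ?thesis by (simp add: colN_def MM_def nat_le_iff)
qed

lemma colN_pos: "z mod MM n \<noteq> 0 \<Longrightarrow> 1 \<le> colN n z"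
proof -
  assume "z mod MM n \<noteq> 0"
  moreover have "0 \<le> z mod MM n" "z mod MM n < MM n" by auto
  ultimately have "1 \<le> min (z mod MM n) (MM n - z mod MM n)" by linarith
  then show ?thesis unfolding colN_def by linarith
qed

lemma colN_cong: "(a - b) mod MM n = 0 \<Longrightarrow> colN n a = colN n b"
proof -
  assume "(a - b) mod MM n = 0"
  then have "a mod MM n = b mod MM n" by (simp add: modeq)
  then show ?thesis by (simp add: colN_def)
qed

lemma colN_neg: "colN n (- z) = colN n z"
proof (cases "z mod MM n = 0")
  case True
  then show ?thesis by (simp add: colN_def zmod_zminus1_eq_if)
next
  case False
  then show ?thesis by (simp add: colN_def zmod_zminus1_eq_if min.commute)
qed

lemma colN_eqI: "a = b \<or> a = - b \<Longrightarrow> colN n a = colN n b"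
proof (elim disjE)
  assume "a = - b" then show ?thesis by (simp only: colN_neg)
qed simp

lemma colN_int: "k \<le> n \<Longrightarrow> colN n (int k) = k"
  by (simp add: colN_def MM_def)

lemma colN_eqD: "colN n a = colN n b \<Longrightarrow> (a - b) mod MM n = 0 \<or> (a + b) mod MM n = 0"
proof -
  assume e: "colN n a = colN n b"
  define r where "r = a mod MM n"
  define s where "s = b mod MM n"
  have r: "0 \<le> r" "r < MM n" and s: "0 \<le> s" "s < MM n" by (auto simp: r_def s_def)
  have "min r (MM n - r) = min s (MM n - s)"
    using e r s unfolding colN_def r_def[symmetric] s_def[symmetric] by simp
  then have "r = s \<or> r + s = MM n" by linarith
  moreover have "(a - b) mod MM n = (r - s) mod MM n" by (simp add: r_def s_def mod_diff_eq)
  moreover have "(a + b) mod MM n = (r + s) mod MM n" by (simp add: r_def s_def mod_add_eq)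
  ultimately show ?thesis
  proof (elim disjE)
    assume "r = s" "(a - b) mod MM n = (r - s) mod MM n"
    then show ?thesis by simp
  next
    assume "r + s = MM n" "(a + b) mod MM n = (r + s) mod MM n"
    then show ?thesis by simp
  qed
qed

lemma colN_neq: "(a - b) mod MM n \<noteq> 0 \<Longrightarrow> (a + b) mod MM n \<noteq> 0 \<Longrightarrow> colN n a \<noteq> colN n b"
proof
  assume "(a - b) mod MM n \<noteq> 0" "(a + b) mod MM n \<noteq> 0" "colN n a = colN n b"
  then show False using colN_eqD[of n a b] by simp
qed

lemma colN_notin:
  assumes "\<And>k. k \<in> K \<Longrightarrow> (z - int k) mod MM n \<noteq> 0 \<and> (z + int k) mod MM n \<noteq> 0"
  shows "colN n z \<notin> K"
proof
  assume "colN n z \<in> K"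
  then have 1: "(z - int (colN n z)) mod MM n \<noteq> 0 \<and> (z + int (colN n z)) mod MM n \<noteq> 0" by (rule assms)
  have "colN n (int (colN n z)) = colN n z" by (rule colN_int[OF colN_le])
  then have "colN n z = colN n (int (colN n z))" by simp
  then show False using 1 colN_eqD[of n z "int (colN n z)"] by simp
qed

lemma nd_col_eq:
  assumes "i \<le> 2 * n" "j \<le> 2 * n"
  shows "nd_col n i j = colN n (int i - int j)"
proof -
  define m where "m = 2 * n + 1"
  define d where "d = (i + m - j) mod m"
  have jm: "j mod m = j" using assms by (simp add: m_def)
  have nd0: "nd_col n i j = min ((i + m - j mod m) mod m) (m - (i + m - j mod m) mod m)"
    by (simp only: nd_col_def Let_def m_def)
  have nd: "nd_col n i j = min d (m - d)" by (simp only: nd0 jm d_def)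
  have Mm: "MM n = int m" by (simp add: MM_def m_def)
  have "int d = int (i + m - j) mod int m" by (simp add: d_def zmod_int)
  also have "int (i + m - j) = int i - int j + int m" using assms by (simp add: m_def)
  finally have di: "int d = (int i - int j) mod MM n" by (simp add: Mm)
  have "d < m" using m_def d_def by simp
  then have "int (min d (m - d)) = min (int d) (int m - int d)" by auto
  then show ?thesis by (simp add: nd colN_def di Mm[symmetric])
qed

lemma nd_col_vx: "nd_col n (vx n a) (vx n b) = colN n (a - b)"
proof -
  have "nd_col n (vx n a) (vx n b) = colN n (a mod MM n - b mod MM n)"
    by (simp add: nd_col_eq vx_le int_vx)
  also have "\<dots> = colN n (a - b)"
    by (rule colN_cong) (metis diff_self mod_0 mod_diff_eq)
  finally show ?thesis .
qed

lemma exists_avoid: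
  assumes "finite F" "card F < 2 * n + 1"
  shows "\<exists>p. \<forall>a\<in>F. (p - a) mod MM n \<noteq> 0"
proof -
  define G where "G = (\<lambda>a. a mod MM n) ` F"
  have "card G \<le> card F" unfolding G_def by (rule card_image_le[OF assms(1)])
  moreover have "card {0..<MM n} = 2 * n + 1" by (simp add: MM_def nat_add_distrib)
  ultimately have "\<not> {0..<MM n} \<subseteq> G"
  proof (intro notI)
    assume "{0..<MM n} \<subseteq> G"
    moreover have "finite G" unfolding G_def using assms(1) by simp
    ultimately have "card {0..<MM n} \<le> card G" by (rule card_mono[rotated])
    then show False using \<open>card G \<le> card F\<close> \<open>card {0..<MM n} = 2 * n + 1\<close> assms(2) by linarith
  qed
  then obtain p where "p \<in> {0..<MM n}" "p \<notin> G" by blast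
  then have p: "0 \<le> p" "p < MM n" "p \<notin> G" by auto
  have "(p - a) mod MM n \<noteq> 0" if "a \<in> F" for a
  proof
    assume "(p - a) mod MM n = 0"
    then have "p mod MM n = a mod MM n" by (simp add: modeq)
    then have "p = a mod MM n" using p by simp
    moreover have "a mod MM n \<in> G" unfolding G_def using that by (rule imageI)
    ultimately show False using p(3) by simp
  qed
  then show ?thesis by (intro exI[of _ p] ballI)
qed

lemma half_nz: "(t - h * (int n + 1)) mod MM n \<noteq> 0 \<Longrightarrow> (2 * t - h) mod MM n \<noteq> 0"
proof -
  assume a: "(t - h * (int n + 1)) mod MM n \<noteq> 0"
  define z where "z = t - h * (int n + 1)"
  show ?thesis
  proof
    assume "(2 * t - h) mod MM n = 0"
    then have d1: "MM n dvd (2 * t - h)" by (simp add: dvd_eq_mod_eq_0)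
    have e1: "2 * z = (2 * t - h) - h * MM n"
      unfolding z_def MM_def by (simp add: algebra_simps)
    have "MM n dvd (2 * t - h) - h * MM n" by (intro dvd_diff d1 dvd_triv_right)
    then have d2: "MM n dvd 2 * z" by (simp only: e1)
    have e2: "z = (int n + 1) * (2 * z) - z * MM n"
      unfolding MM_def by (simp add: algebra_simps)
    have "MM n dvd (int n + 1) * (2 * z) - z * MM n" by (intro dvd_diff dvd_mult d2 dvd_triv_right)
    then have "MM n dvd z" by (simp only: e2[symmetric])
    then show False using a by (simp add: dvd_eq_mod_eq_0 z_def)
  qed
qed

lemma nz_small: "z \<noteq> 0 \<Longrightarrow> \<bar>z\<bar> < MM n \<Longrightarrow> z mod MM n \<noteq> 0"
proof -
  assume a: "z \<noteq> 0" "\<bar>z\<bar> < MM n"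
  show ?thesis
  proof
    assume "z mod MM n = 0"
    then have "MM n dvd z" by (simp add: dvd_eq_mod_eq_0)
    then have "\<bar>MM n\<bar> \<le> \<bar>z\<bar>" using dvd_imp_le_int a(1) by blast
    then show False using a(2) by simp
  qed
qed

lemma Z1: "\<forall>a\<in>F. (p - a) mod MM n \<noteq> 0 \<Longrightarrow> a \<in> F \<Longrightarrow> z = p - a \<Longrightarrow> z mod MM n \<noteq> 0"
  by simp

lemma Z2: "\<forall>a\<in>F. (p - a) mod MM n \<noteq> 0 \<Longrightarrow> a \<in> F \<Longrightarrow> z = a - p \<Longrightarrow> z mod MM n \<noteq> 0"
proof -
  assume "\<forall>a\<in>F. (p - a) mod MM n \<noteq> 0" "a \<in> F" "z = a - p"
  then have "\<not> MM n dvd (p - a)" "z = - (p - a)" by (auto simp: dvd_eq_mod_eq_0)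
  then have "\<not> MM n dvd z" by (metis dvd_minus_iff)
  then show ?thesis by (simp add: dvd_eq_mod_eq_0)
qed

lemma V1: "\<forall>a\<in>F. (p - a) mod MM n \<noteq> 0 \<Longrightarrow> a \<in> F \<Longrightarrow> c - d = p - a \<Longrightarrow> vx n c \<noteq> vx n d"
proof -
  assume "\<forall>a\<in>F. (p - a) mod MM n \<noteq> 0" "a \<in> F" "c - d = p - a"
  then have "(c - d) mod MM n \<noteq> 0" by simp
  then show ?thesis by (rule vx_neq)
qed

lemma XN1:
  assumes "\<forall>a\<in>F. (p - a) mod MM n \<noteq> 0" "\<And>v. v \<in> X \<Longrightarrow> f v \<in> F" "\<And>v. z - int v = p - f v"
  shows "vx n z \<notin> X"
proof (rule vx_notin)
  fix v assume "v \<in> X"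
  then show "(z - int v) mod MM n \<noteq> 0" using Z1[OF assms(1) assms(2) assms(3)] by simp
qed

lemma XN2:
  assumes "\<forall>a\<in>F. (p - a) mod MM n \<noteq> 0" "\<And>v. v \<in> X \<Longrightarrow> f v \<in> F" "\<And>v. z - int v = f v - p"
  shows "vx n z \<notin> X"
proof (rule vx_notin)
  fix v assume "v \<in> X"
  then show "(z - int v) mod MM n \<noteq> 0" using Z2[OF assms(1) assms(2) assms(3)] by simp
qed

lemma Z12: "\<forall>a\<in>F. (p - a) mod MM n \<noteq> 0 \<Longrightarrow> a \<in> F \<Longrightarrow> z = p - a \<or> z = a - p \<Longrightarrow> z mod MM n \<noteq> 0"
  using Z1 Z2 by metis

lemma KN:
  assumes H: "\<forall>a\<in>F. (p - a) mod MM n \<noteq> 0"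
    and m1: "\<And>k. k \<in> K \<Longrightarrow> fa k \<in> F" and m2: "\<And>k. k \<in> K \<Longrightarrow> fb k \<in> F"
    and q1: "\<And>k. z - int k = p - fa k \<or> z - int k = fa k - p"
    and q2: "\<And>k. z + int k = p - fb k \<or> z + int k = fb k - p"
  shows "colN n z \<notin> K"
proof (rule colN_notin)
  fix k assume k: "k \<in> K"
  show "(z - int k) mod MM n \<noteq> 0 \<and> (z + int k) mod MM n \<noteq> 0"
  proof
    show "(z - int k) mod MM n \<noteq> 0" by (rule Z12[OF H m1[OF k] q1])
    show "(z + int k) mod MM n \<noteq> 0" by (rule Z12[OF H m2[OF k] q2])
  qed
qed

lemma cUn: "card A \<le> a \<Longrightarrow> card B \<le> b \<Longrightarrow> card (A \<union> B) \<le> a + b"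
  using card_Un_le[of A B] by linarith

lemma cIm: "finite A \<Longrightarrow> card A \<le> a \<Longrightarrow> card (f ` A) \<le> a"
  using card_image_le[of A f] by linarith

lemma cL: "length xs \<le> a \<Longrightarrow> card (set xs) \<le> a"
  using card_length[of xs] by linarith

lemma nz_dvd: "z mod MM n \<noteq> 0 \<longleftrightarrow> \<not> MM n dvd z"
  by (simp add: dvd_eq_mod_eq_0)



theorem lemma5p2:
  shows "\<exists>N. \<forall>n\<ge>N. \<forall>x y c1 c2 X C.
    x \<in> nd_vertices n \<and> y \<in> nd_vertices n \<and> x \<noteq> y \<and>
    c1 \<in> nd_colours n \<and> c2 \<in> nd_colours n \<and> c1 \<noteq> c2 \<and>
    X \<subseteq> nd_vertices n \<and> C \<subseteq> nd_colours n \<and>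
    25 * card X \<le> n \<and> 25 * card C \<le> n \<longrightarrow>
    (\<exists>C'. C' \<subseteq> nd_colours n - (C \<union> {c1, c2}) \<and> card C' = 6 \<and>
       (\<forall>c\<in>{c1, c2}. \<exists>P. is_xy_path n x y 7 P \<and> rainbow n (C' \<union> {c}) P \<and>
          interior P \<subseteq> nd_vertices n - X))"
proof (intro exI[of _ 100] allI impI)
  fix n x y c1 c2 :: nat and X C :: "nat set"
  assume n100: "100 \<le> n"
  assume A: "x \<in> nd_vertices n \<and> y \<in> nd_vertices n \<and> x \<noteq> y \<and>
    c1 \<in> nd_colours n \<and> c2 \<in> nd_colours n \<and> c1 \<noteq> c2 \<and>
    X \<subseteq> nd_vertices n \<and> C \<subseteq> nd_colours n \<and>
    25 * card X \<le> n \<and> 25 * card C \<le> n"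
  have hx: "x \<le> 2 * n" and hy: "y \<le> 2 * n" and xy: "x \<noteq> y"
    and hc1: "1 \<le> c1" "c1 \<le> n" and hc2: "1 \<le> c2" "c2 \<le> n" and c12: "c1 \<noteq> c2"
    and XS: "X \<subseteq> {0..2*n}" and CS: "C \<subseteq> {1..n}"
    and cX: "25 * card X \<le> n" and cC: "25 * card C \<le> n"
    using A by (auto simp: nd_vertices_def nd_colours_def)
  have finX: "finite X" using XS finite_subset by blast
  have finC: "finite C" using CS finite_subset by blast
  define K where "K = C \<union> {c1, c2}"
  have finK: "finite K" using finC by (simp add: K_def)
  have cK: "card K \<le> card C + 2"
  proof -
    have "card {c1, c2} \<le> 2" using cL[of "[c1, c2]" 2] by simp
    then show ?thesis unfolding K_def using card_Un_le[of C "{c1, c2}"] by linarith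
  qed
  have c1K: "c1 \<in> K" and c2K: "c2 \<in> K" by (auto simp: K_def)
  define xi where "xi = int x"
  define yi where "yi = int y"
  define a1 where "a1 = int c1"
  define a2 where "a2 = int c2"
  define h where "h = (a2 - a1) * (int n + 1)"
  have h2: "2 * h = (a2 - a1) + (a2 - a1) * MM n" by (simp add: h_def MM_def algebra_simps)
  have f_a1: "a1 mod MM n \<noteq> 0" using hc1 by (intro nz_small) (auto simp: a1_def MM_def)
  have f_a2: "a2 mod MM n \<noteq> 0" using hc2 by (intro nz_small) (auto simp: a2_def MM_def)
  have f_xy: "(yi - xi) mod MM n \<noteq> 0" using hx hy xy by (intro nz_small) (auto simp: xi_def yi_def MM_def)
  have f_d: "(a2 - a1) mod MM n \<noteq> 0" using hc1 hc2 c12 by (intro nz_small) (auto simp: a1_def a2_def MM_def)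
  have f_s: "(a1 + a2) mod MM n \<noteq> 0" using hc1 hc2 by (intro nz_small) (auto simp: a1_def a2_def MM_def)
  have f_h: "h mod MM n \<noteq> 0"
  proof
    assume "h mod MM n = 0"
    then have "MM n dvd h" by (simp add: dvd_eq_mod_eq_0)
    then have "MM n dvd 2 * h - (a2 - a1) * MM n" by (intro dvd_diff dvd_mult dvd_triv_right)
    then have "MM n dvd (a2 - a1)" by (simp only: h2) simp
    then show False using f_d by (simp add: dvd_eq_mod_eq_0)
  qed
  have f_ch: "(a1 + h) mod MM n \<noteq> 0"
  proof
    assume "(a1 + h) mod MM n = 0"
    then have "MM n dvd (a1 + h)" by (simp add: dvd_eq_mod_eq_0)
    then have "MM n dvd 2 * (a1 + h) - (a2 - a1) * MM n" by (intro dvd_diff dvd_mult dvd_triv_right)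
    moreover have "2 * (a1 + h) - (a2 - a1) * MM n = a1 + a2" using h2 by simp
    ultimately have "MM n dvd (a1 + a2)" by metis
    then show False using f_s by (simp add: dvd_eq_mod_eq_0)
  qed
  have f_2h: "(a2 - a1 - 2 * h) mod MM n = 0"
  proof -
    have "a2 - a1 - 2 * h = - ((a2 - a1) * MM n)" using h2 by simp
    then show ?thesis by simp
  qed
  have bigK: "card K * 4 + card X * 4 + 40 < 2 * n + 1" using cK cX cC n100 by linarith

  define Fu where "Fu = set [0, yi - xi, -(a1 + h), yi - xi - a1 - h] \<union> int ` K \<union> (\<lambda>k. - int k) ` K
      \<union> (\<lambda>v. int v - xi) ` X \<union> (\<lambda>v. int v - xi - a1 - h) ` X"
  have "card Fu \<le> 4 + card K + card K + card X + card X"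
    unfolding Fu_def by (intro cUn cIm cL order_refl finK finX) simp
  moreover have "finite Fu" unfolding Fu_def using finK finX by simp
  ultimately obtain u where Hu: "\<forall>a\<in>Fu. (u - a) mod MM n \<noteq> 0"
    using exists_avoid[of Fu n] bigK by auto
  define Ft where "Ft = set [-u, 0, a1 + h, yi - xi - u, -u - a1, -a1, h, yi - xi - u - a1, u, -(a1 + h),
      xi + u - yi, u + a2, a2, a2 - a1 - h, xi + u + a2 - yi, h - u, h + u, h * (int n + 1)]
      \<union> int ` K \<union> (\<lambda>k. - int k) ` K \<union> (\<lambda>k. h - int k) ` K \<union> (\<lambda>k. h + int k) ` K
      \<union> (\<lambda>v. int v - xi - u) ` X \<union> (\<lambda>v. int v - xi - u - a1) ` X
      \<union> (\<lambda>v. xi + u - int v) ` X \<union> (\<lambda>v. xi + u + a2 - int v) ` X"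
  have "card Ft \<le> 18 + card K + card K + card K + card K + card X + card X + card X + card X"
    unfolding Ft_def by (intro cUn cIm cL order_refl finK finX) simp
  moreover have "finite Ft" unfolding Ft_def using finK finX by simp
  ultimately obtain t where Ht: "\<forall>a\<in>Ft. (t - a) mod MM n \<noteq> 0"
    using exists_avoid[of Ft n] bigK by auto
  define e0 where "e0 = xi"
  define e1 where "e1 = xi + u"
  define e2 where "e2 = xi + u + t"
  define e3 where "e3 = xi + u + t + a1"
  define e4 where "e4 = xi + u + a1 + h"
  define f2 where "f2 = xi + u - t"
  define f3 where "f3 = xi + u - t + a2"
  define e7 where "e7 = yi"
  define Fv where "Fv = (\<lambda>z. z - e4) ` set [e0, e1, e2, e3, e4, e7, f2, f3] \<union> (\<lambda>v. int v - e4) ` X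
     \<union> int ` K \<union> (\<lambda>k. - int k) ` K \<union> set [u, -u, t, -t, h - t, -(h - t)]"
  have "card Fv \<le> 8 + card X + card K + card K + 6"
    unfolding Fv_def by (intro cUn cIm cL order_refl finK finX) simp_all
  moreover have "finite Fv" unfolding Fv_def using finK finX by simp
  ultimately obtain v where Hv: "\<forall>a\<in>Fv. (v - a) mod MM n \<noteq> 0"
    using exists_avoid[of Fv n] bigK by auto
  define e5 where "e5 = e4 + v"
  define Y where "Y = yi - e5"
  define Fw where "Fw = (\<lambda>z. z - e5) ` set [e0, e1, e2, e3, e4, e5, e7, f2, f3] \<union> (\<lambda>v. int v - e5) ` X
     \<union> int ` K \<union> (\<lambda>k. - int k) ` K \<union> (\<lambda>k. Y - int k) ` K \<union> (\<lambda>k. Y + int k) ` K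
     \<union> set [u, t, h - t, v] \<union> uminus ` set [u, t, h - t, v] \<union> (\<lambda>q. Y - q) ` set [u, t, h - t, v]
     \<union> (\<lambda>q. Y + q) ` set [u, t, h - t, v] \<union> set [Y * (int n + 1)]"
  have "card Fw \<le> 9 + card X + card K + card K + card K + card K + 4 + 4 + 4 + 4 + 1"
    unfolding Fw_def by (intro cUn cIm cL order_refl finK finX) simp_all
  moreover have "finite Fw" unfolding Fw_def using finK finX by simp
  ultimately obtain w where Hw: "\<forall>a\<in>Fw. (w - a) mod MM n \<noteq> 0"
    using exists_avoid[of Fw n] bigK by auto
  define e6 where "e6 = e5 + w"
  define L where "L = yi - e6"
  note edefs = e0_def e1_def e2_def e3_def e4_def f2_def f3_def e7_def e5_def e6_def
  have DV0: "vx n e1 \<noteq> vx n e0" by (rule V1[OF Hu, where a="0"]) (simp add: Fu_def, simp add: edefs algebra_simps)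
  have DV1: "vx n e4 \<noteq> vx n e0" by (rule V1[OF Hu, where a="-(a1 + h)"]) (simp add: Fu_def, simp add: edefs algebra_simps)
  have DV2: "vx n e1 \<noteq> vx n e7" by (rule V1[OF Hu, where a="yi - xi"]) (simp add: Fu_def, simp add: edefs algebra_simps)
  have DV3: "vx n e4 \<noteq> vx n e7" by (rule V1[OF Hu, where a="yi - xi - a1 - h"]) (simp add: Fu_def, simp add: edefs algebra_simps)
  have DV4: "vx n e2 \<noteq> vx n e0" by (rule V1[OF Ht, where a="-u"]) (simp add: Ft_def, simp add: edefs algebra_simps)
  have DV5: "vx n e2 \<noteq> vx n e1" by (rule V1[OF Ht, where a="0"]) (simp add: Ft_def, simp add: edefs algebra_simps)
  have DV6: "vx n e2 \<noteq> vx n e4" by (rule V1[OF Ht, where a="a1 + h"]) (simp add: Ft_def, simp add: edefs algebra_simps)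
  have DV7: "vx n e2 \<noteq> vx n e7" by (rule V1[OF Ht, where a="yi - xi - u"]) (simp add: Ft_def, simp add: edefs algebra_simps)
  have DV8: "vx n e3 \<noteq> vx n e0" by (rule V1[OF Ht, where a="-u - a1"]) (simp add: Ft_def, simp add: edefs algebra_simps)
  have DV9: "vx n e3 \<noteq> vx n e1" by (rule V1[OF Ht, where a="-a1"]) (simp add: Ft_def, simp add: edefs algebra_simps)
  have DV10: "vx n e3 \<noteq> vx n e4" by (rule V1[OF Ht, where a="h"]) (simp add: Ft_def, simp add: edefs algebra_simps)
  have DV11: "vx n e3 \<noteq> vx n e7" by (rule V1[OF Ht, where a="yi - xi - u - a1"]) (simp add: Ft_def, simp add: edefs algebra_simps)
  have DV12: "vx n e0 \<noteq> vx n f2" by (rule V1[OF Ht, where a="u"]) (simp add: Ft_def, simp add: edefs algebra_simps)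
  have DV13: "vx n e1 \<noteq> vx n f2" by (rule V1[OF Ht, where a="0"]) (simp add: Ft_def, simp add: edefs algebra_simps)
  have DV14: "vx n e4 \<noteq> vx n f2" by (rule V1[OF Ht, where a="-(a1 + h)"]) (simp add: Ft_def, simp add: edefs algebra_simps)
  have DV15: "vx n e7 \<noteq> vx n f2" by (rule V1[OF Ht, where a="xi + u - yi"]) (simp add: Ft_def, simp add: edefs algebra_simps)
  have DV16: "vx n e0 \<noteq> vx n f3" by (rule V1[OF Ht, where a="u + a2"]) (simp add: Ft_def, simp add: edefs algebra_simps)
  have DV17: "vx n e1 \<noteq> vx n f3" by (rule V1[OF Ht, where a="a2"]) (simp add: Ft_def, simp add: edefs algebra_simps)
  have DV18: "vx n e4 \<noteq> vx n f3" by (rule V1[OF Ht, where a="a2 - a1 - h"]) (simp add: Ft_def, simp add: edefs algebra_simps)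
  have DV19: "vx n e7 \<noteq> vx n f3" by (rule V1[OF Ht, where a="xi + u + a2 - yi"]) (simp add: Ft_def, simp add: edefs algebra_simps)
  have DV20: "vx n e5 \<noteq> vx n e0" by (rule V1[OF Hv, where a="e0 - e4"]) (simp add: Fv_def, simp add: edefs algebra_simps)
  have DV21: "vx n e5 \<noteq> vx n e1" by (rule V1[OF Hv, where a="e1 - e4"]) (simp add: Fv_def, simp add: edefs algebra_simps)
  have DV22: "vx n e5 \<noteq> vx n e2" by (rule V1[OF Hv, where a="e2 - e4"]) (simp add: Fv_def, simp add: edefs algebra_simps)
  have DV23: "vx n e5 \<noteq> vx n e3" by (rule V1[OF Hv, where a="e3 - e4"]) (simp add: Fv_def, simp add: edefs algebra_simps)
  have DV24: "vx n e5 \<noteq> vx n e4" by (rule V1[OF Hv, where a="e4 - e4"]) (simp add: Fv_def, simp add: edefs algebra_simps)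
  have DV25: "vx n e5 \<noteq> vx n e7" by (rule V1[OF Hv, where a="e7 - e4"]) (simp add: Fv_def, simp add: edefs algebra_simps)
  have DV26: "vx n e5 \<noteq> vx n f2" by (rule V1[OF Hv, where a="f2 - e4"]) (simp add: Fv_def, simp add: edefs algebra_simps)
  have DV27: "vx n e5 \<noteq> vx n f3" by (rule V1[OF Hv, where a="f3 - e4"]) (simp add: Fv_def, simp add: edefs algebra_simps)
  have DV28: "vx n e6 \<noteq> vx n e0" by (rule V1[OF Hw, where a="e0 - e5"]) (simp add: Fw_def, simp add: edefs algebra_simps)
  have DV29: "vx n e6 \<noteq> vx n e1" by (rule V1[OF Hw, where a="e1 - e5"]) (simp add: Fw_def, simp add: edefs algebra_simps)
  have DV30: "vx n e6 \<noteq> vx n e2" by (rule V1[OF Hw, where a="e2 - e5"]) (simp add: Fw_def, simp add: edefs algebra_simps)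
  have DV31: "vx n e6 \<noteq> vx n e3" by (rule V1[OF Hw, where a="e3 - e5"]) (simp add: Fw_def, simp add: edefs algebra_simps)
  have DV32: "vx n e6 \<noteq> vx n e4" by (rule V1[OF Hw, where a="e4 - e5"]) (simp add: Fw_def, simp add: edefs algebra_simps)
  have DV33: "vx n e6 \<noteq> vx n e5" by (rule V1[OF Hw, where a="e5 - e5"]) (simp add: Fw_def, simp add: edefs algebra_simps)
  have DV34: "vx n e6 \<noteq> vx n e7" by (rule V1[OF Hw, where a="e7 - e5"]) (simp add: Fw_def, simp add: edefs algebra_simps)
  have DV35: "vx n e6 \<noteq> vx n f2" by (rule V1[OF Hw, where a="f2 - e5"]) (simp add: Fw_def, simp add: edefs algebra_simps)
  have DV36: "vx n e6 \<noteq> vx n f3" by (rule V1[OF Hw, where a="f3 - e5"]) (simp add: Fw_def, simp add: edefs algebra_simps)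
  have DV37: "vx n e4 \<noteq> vx n e1" by (rule vx_neq) (use f_ch in \<open>simp add: edefs algebra_simps\<close>)
  have DV38: "vx n e3 \<noteq> vx n e2" by (rule vx_neq) (use f_a1 in \<open>simp add: edefs algebra_simps\<close>)
  have DV39: "vx n f3 \<noteq> vx n f2" by (rule vx_neq) (use f_a2 in \<open>simp add: edefs algebra_simps\<close>)
  have DV40: "vx n e7 \<noteq> vx n e0" by (rule vx_neq) (use f_xy in \<open>simp add: edefs algebra_simps\<close>)
  note DV = DV0 DV1 DV2 DV3 DV4 DV5 DV6 DV7 DV8 DV9 DV10 DV11 DV12 DV13 DV14 DV15 DV16 DV17 DV18 DV19 DV20 DV21 DV22 DV23 DV24 DV25 DV26 DV27 DV28 DV29 DV30 DV31 DV32 DV33 DV34 DV35 DV36 DV37 DV38 DV39 DV40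
  have xe1: "vx n e1 \<notin> X" by (rule XN1[OF Hu, where f="\<lambda>v. int v - xi"]) (auto simp: Fu_def edefs)
  have xe4: "vx n e4 \<notin> X" by (rule XN1[OF Hu, where f="\<lambda>v. int v - xi - a1 - h"]) (auto simp: Fu_def edefs)
  have xe2: "vx n e2 \<notin> X" by (rule XN1[OF Ht, where f="\<lambda>v. int v - xi - u"]) (auto simp: Ft_def edefs)
  have xe3: "vx n e3 \<notin> X" by (rule XN1[OF Ht, where f="\<lambda>v. int v - xi - u - a1"]) (auto simp: Ft_def edefs)
  have xf2: "vx n f2 \<notin> X" by (rule XN2[OF Ht, where f="\<lambda>v. xi + u - int v"]) (auto simp: Ft_def edefs)
  have xf3: "vx n f3 \<notin> X" by (rule XN2[OF Ht, where f="\<lambda>v. xi + u + a2 - int v"]) (auto simp: Ft_def edefs)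
  have xe5: "vx n e5 \<notin> X" by (rule XN1[OF Hv, where f="\<lambda>v. int v - e4"]) (auto simp: Fv_def e5_def)
  have xe6: "vx n e6 \<notin> X" by (rule XN1[OF Hw, where f="\<lambda>v. int v - e5"]) (auto simp: Fw_def e6_def)
  have kU: "colN n u \<notin> K" by (rule KN[OF Hu, where fa=int and fb="\<lambda>k. - int k"]) (auto simp: Fu_def)
  have kT: "colN n t \<notin> K" by (rule KN[OF Ht, where fa=int and fb="\<lambda>k. - int k"]) (auto simp: Ft_def)
  have kH: "colN n (h - t) \<notin> K" by (rule KN[OF Ht, where fa="\<lambda>k. h - int k" and fb="\<lambda>k. h + int k"]) (auto simp: Ft_def)
  have kV: "colN n v \<notin> K" by (rule KN[OF Hv, where fa=int and fb="\<lambda>k. - int k"]) (auto simp: Fv_def)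
  have kW: "colN n w \<notin> K" by (rule KN[OF Hw, where fa=int and fb="\<lambda>k. - int k"]) (auto simp: Fw_def)
  have kL: "colN n L \<notin> K" by (rule KN[OF Hw, where fa="\<lambda>k. Y - int k" and fb="\<lambda>k. Y + int k"]) (auto simp: Fw_def L_def e6_def Y_def)
  have pU: "u mod MM n \<noteq> 0" by (rule Z1[OF Hu, where a=0]) (auto simp: Fu_def)
  have pT: "t mod MM n \<noteq> 0" by (rule Z1[OF Ht, where a=0]) (auto simp: Ft_def)
  have pH: "(h - t) mod MM n \<noteq> 0" by (rule Z2[OF Ht, where a=h]) (auto simp: Ft_def)
  have pV: "v mod MM n \<noteq> 0" by (rule Z1[OF Hv, where a="e4 - e4"]) (auto simp: Fv_def)
  have pW: "w mod MM n \<noteq> 0" by (rule Z1[OF Hw, where a="e5 - e5"]) (auto simp: Fw_def)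
  have pL: "L mod MM n \<noteq> 0" by (rule Z2[OF Hw, where a="e7 - e5"]) (auto simp: Fw_def L_def e6_def e7_def)
  have pY: "Y mod MM n \<noteq> 0" by (rule Z2[OF Hv, where a="e7 - e4"]) (auto simp: Fv_def Y_def e5_def e7_def)
  have NC0: "colN n t \<noteq> colN n u" by (rule colN_neq[OF Z1[OF Ht, where a=u] Z1[OF Ht, where a="-u"]]) (auto simp: Ft_def)
  have NC1: "colN n (h - t) \<noteq> colN n u" by (rule colN_neq[OF Z2[OF Ht, where a="h - u"] Z2[OF Ht, where a="h + u"]]) (auto simp: Ft_def)
  have NC2: "colN n t \<noteq> colN n (h - t)"
  proof (rule colN_neq)
    have "(2 * t - h) mod MM n \<noteq> 0" by (rule half_nz, rule Z1[OF Ht, where a="h * (int n + 1)"]) (auto simp: Ft_def)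
    moreover have "t - (h - t) = 2 * t - h" by simp
    ultimately show "(t - (h - t)) mod MM n \<noteq> 0" by simp
    show "(t + (h - t)) mod MM n \<noteq> 0" using f_h by simp
  qed
  have NC3: "colN n v \<noteq> colN n u" by (rule colN_neq[OF Z1[OF Hv, where a=u] Z1[OF Hv, where a="-u"]]) (auto simp: Fv_def)
  have NC4: "colN n v \<noteq> colN n t" by (rule colN_neq[OF Z1[OF Hv, where a=t] Z1[OF Hv, where a="-t"]]) (auto simp: Fv_def)
  have NC5: "colN n v \<noteq> colN n (h - t)" by (rule colN_neq[OF Z1[OF Hv, where a="h - t"] Z1[OF Hv, where a="-(h - t)"]]) (auto simp: Fv_def)
  have NC6: "colN n w \<noteq> colN n u" by (rule colN_neq[OF Z1[OF Hw, where a=u] Z1[OF Hw, where a="-u"]]) (auto simp: Fw_def)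
  have NC7: "colN n w \<noteq> colN n t" by (rule colN_neq[OF Z1[OF Hw, where a=t] Z1[OF Hw, where a="-t"]]) (auto simp: Fw_def)
  have NC8: "colN n w \<noteq> colN n (h - t)" by (rule colN_neq[OF Z1[OF Hw, where a="h - t"] Z1[OF Hw, where a="-(h - t)"]]) (auto simp: Fw_def)
  have NC9: "colN n w \<noteq> colN n v" by (rule colN_neq[OF Z1[OF Hw, where a=v] Z1[OF Hw, where a="-v"]]) (auto simp: Fw_def)
  have LY: "L = Y - w" by (simp add: L_def Y_def e6_def)
  have NC10: "colN n L \<noteq> colN n u" by (rule colN_neq[OF Z2[OF Hw, where a="Y - u"] Z2[OF Hw, where a="Y + u"]]) (auto simp: Fw_def LY)
  have NC11: "colN n L \<noteq> colN n t" by (rule colN_neq[OF Z2[OF Hw, where a="Y - t"] Z2[OF Hw, where a="Y + t"]]) (auto simp: Fw_def LY)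
  have NC12: "colN n L \<noteq> colN n (h - t)" by (rule colN_neq[OF Z2[OF Hw, where a="Y - (h - t)"] Z2[OF Hw, where a="Y + (h - t)"]]) (auto simp: Fw_def LY)
  have NC13: "colN n L \<noteq> colN n v" by (rule colN_neq[OF Z2[OF Hw, where a="Y - v"] Z2[OF Hw, where a="Y + v"]]) (auto simp: Fw_def LY)
  have NC14: "colN n w \<noteq> colN n L"
  proof (rule colN_neq)
    have "(2 * w - Y) mod MM n \<noteq> 0" by (rule half_nz, rule Z1[OF Hw, where a="Y * (int n + 1)"]) (auto simp: Fw_def)
    moreover have "w - L = 2 * w - Y" by (simp add: LY algebra_simps)
    ultimately show "(w - L) mod MM n \<noteq> 0" by metis
    show "(w + L) mod MM n \<noteq> 0" using pY by (simp add: LY)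
  qed
  note NC = NC0 NC1 NC2 NC3 NC4 NC5 NC6 NC7 NC8 NC9 NC10 NC11 NC12 NC13 NC14
  have vx0: "vx n e0 = x" using hx by (simp add: e0_def xi_def vx_int)
  have vx7: "vx n e7 = y" using hy by (simp add: e7_def yi_def vx_int)
  define cl where "cl = [colN n u, colN n t, colN n (h - t), colN n v, colN n w, colN n L]"
  have dcl: "distinct cl" using NC NC[THEN not_sym] by (simp add: cl_def)
  have ccl: "card (set cl) = 6" using distinct_card[OF dcl] by (simp add: cl_def)
  have rng: "\<And>z. z mod MM n \<noteq> 0 \<Longrightarrow> colN n z \<in> nd_colours n"
    using colN_pos colN_le by (simp add: nd_colours_def)
  have scl: "set cl \<subseteq> nd_colours n - (C \<union> {c1, c2})"
    using rng[OF pU] rng[OF pT] rng[OF pH] rng[OF pV] rng[OF pW] rng[OF pL] kU kT kH kV kW kL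
    unfolding K_def cl_def by auto
  have q1: "colN n (e0 - e1) = colN n u" by (rule colN_eqI) (simp add: edefs)
  have q2: "colN n (e1 - e2) = colN n t" by (rule colN_eqI) (simp add: edefs)
  have q3: "colN n (e2 - e3) = c1"
  proof -
    have "colN n (e2 - e3) = colN n (int c1)" by (rule colN_eqI) (simp add: edefs a1_def)
    then show ?thesis using colN_int[OF hc1(2)] by simp
  qed
  have q4: "colN n (e3 - e4) = colN n (h - t)" by (rule colN_eqI) (simp add: edefs)
  have q5: "colN n (e4 - e5) = colN n v" by (rule colN_eqI) (simp add: edefs)
  have q6: "colN n (e5 - e6) = colN n w" by (rule colN_eqI) (simp add: edefs)
  have q7: "colN n (e6 - e7) = colN n L" by (rule colN_eqI) (simp add: edefs L_def)
  have r2: "colN n (e1 - f2) = colN n t" by (rule colN_eqI) (simp add: edefs)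
  have r3: "colN n (f2 - f3) = c2"
  proof -
    have "colN n (f2 - f3) = colN n (int c2)" by (rule colN_eqI) (simp add: edefs a2_def)
    then show ?thesis using colN_int[OF hc2(2)] by simp
  qed
  have r4: "colN n (f3 - e4) = colN n (h - t)"
  proof (rule colN_cong)
    have "f3 - e4 - (h - t) = a2 - a1 - 2 * h" by (simp add: edefs algebra_simps)
    then show "(f3 - e4 - (h - t)) mod MM n = 0" using f_2h by (simp only:)
  qed
  define P1 where "P1 = map (vx n) [e0, e1, e2, e3, e4, e5, e6, e7]"
  define P2 where "P2 = map (vx n) [e0, e1, f2, f3, e4, e5, e6, e7]"
  have pc1: "path_colours n P1 = [colN n u, colN n t, c1, colN n (h - t), colN n v, colN n w, colN n L]"
    by (simp add: P1_def path_colours_def path_edges_def nd_col_vx q1 q2 q3 q4 q5 q6 q7)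
  have pc2: "path_colours n P2 = [colN n u, colN n t, c2, colN n (h - t), colN n v, colN n w, colN n L]"
    by (simp add: P2_def path_colours_def path_edges_def nd_col_vx q1 r2 r3 r4 q5 q6 q7)
  have kk: "colN n u \<noteq> c1" "colN n t \<noteq> c1" "colN n (h - t) \<noteq> c1" "colN n v \<noteq> c1" "colN n w \<noteq> c1" "colN n L \<noteq> c1"
    "colN n u \<noteq> c2" "colN n t \<noteq> c2" "colN n (h - t) \<noteq> c2" "colN n v \<noteq> c2" "colN n w \<noteq> c2" "colN n L \<noteq> c2"
    using kU kT kH kV kW kL unfolding K_def by auto
  have vin: "\<And>z. vx n z \<in> nd_vertices n" using vx_le by (simp add: nd_vertices_def)
  have path1: "is_xy_path n x y 7 P1 \<and> rainbow n (set cl \<union> {c1}) P1 \<and> interior P1 \<subseteq> nd_vertices n - X"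
  proof (intro conjI)
    show "is_xy_path n x y 7 P1"
      unfolding is_xy_path_def using DV DV[THEN not_sym] vin vx0 vx7 A by (simp add: P1_def)
    show "rainbow n (set cl \<union> {c1}) P1"
      unfolding rainbow_def pc1 using dcl kk kk[THEN not_sym] by (auto simp: cl_def)
    show "interior P1 \<subseteq> nd_vertices n - X"
      unfolding interior_def P1_def using vin xe1 xe2 xe3 xe4 xe5 xe6 by simp
  qed
  have path2: "is_xy_path n x y 7 P2 \<and> rainbow n (set cl \<union> {c2}) P2 \<and> interior P2 \<subseteq> nd_vertices n - X"
  proof (intro conjI)
    show "is_xy_path n x y 7 P2"
      unfolding is_xy_path_def using DV DV[THEN not_sym] vin vx0 vx7 A by (simp add: P2_def)
    show "rainbow n (set cl \<union> {c2}) P2"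
      unfolding rainbow_def pc2 using dcl kk kk[THEN not_sym] by (auto simp: cl_def)
    show "interior P2 \<subseteq> nd_vertices n - X"
      unfolding interior_def P2_def using vin xe1 xf2 xf3 xe4 xe5 xe6 by simp
  qed
  show "\<exists>C'. C' \<subseteq> nd_colours n - (C \<union> {c1, c2}) \<and> card C' = 6 \<and>
       (\<forall>c\<in>{c1, c2}. \<exists>P. is_xy_path n x y 7 P \<and> rainbow n (C' \<union> {c}) P \<and>
          interior P \<subseteq> nd_vertices n - X)"
    using scl ccl path1 path2 by blast
qed

end
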